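(* Assume $q\neq0$. For all integers $n,r,s$, $$h_{n+s}h_{n-r}-h_nh_{n-r+s}=Eq^{n-r}\left(v_{r+s}-q^sv_{r-s}\right).$$
   Context: Let $p,q,a,b$ be complex numbers with $q\neq 0$, and let $E=b^2-abp+a^2q$. The sequence $(v_n)$ is defined by $v_0=2$, $v_1=p$, $v_n=pv_{n-1}-qv_{n-2}$. The Horadam-Lucas sequence $(h_n)$ is defined by $h_0=2b-ap$, $h_1=bp-2aq$, $h_n=ph_{n-1}-qh_{n-2}$. Both are extended to all integer indices by $x_{n-2}=(px_{n-1}-x_n)/q$. *)

theory Defs
  imports Complex_Main
begin

fun rec_fwd :: "complex \<Rightarrow> complex \<Rightarrow> complex \<Rightarrow> complex \<Rightarrow> nat \<Rightarrow> complex" where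
  "rec_fwd p q x0 x1 0 = x0"
| "rec_fwd p q x0 x1 (Suc 0) = x1"
| "rec_fwd p q x0 x1 (Suc (Suc n)) = p * rec_fwd p q x0 x1 (Suc n) - q * rec_fwd p q x0 x1 n"

text \<open>Backward part: rec_bwd k = x_{-k}, via x_{n-2} = (p x_{n-1} - x_n)/q.\<close>
fun rec_bwd :: "complex \<Rightarrow> complex \<Rightarrow> complex \<Rightarrow> complex \<Rightarrow> nat \<Rightarrow> complex" where
  "rec_bwd p q x0 x1 0 = x0"
| "rec_bwd p q x0 x1 (Suc 0) = (p * x0 - x1) / q"
| "rec_bwd p q x0 x1 (Suc (Suc k)) = (p * rec_bwd p q x0 x1 (Suc k) - rec_bwd p q x0 x1 k) / q"

definition rec_seq :: "complex \<Rightarrow> complex \<Rightarrow> complex \<Rightarrow> complex \<Rightarrow> int \<Rightarrow> complex" where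
  "rec_seq p q x0 x1 n = (if n \<ge> 0 then rec_fwd p q x0 x1 (nat n) else rec_bwd p q x0 x1 (nat (- n)))"

definition lucasV :: "complex \<Rightarrow> complex \<Rightarrow> int \<Rightarrow> complex" where
  "lucasV p q = rec_seq p q 2 p"

definition horadamLucas :: "complex \<Rightarrow> complex \<Rightarrow> complex \<Rightarrow> complex \<Rightarrow> int \<Rightarrow> complex" where
  "horadamLucas p q a b = rec_seq p q (2 * b - a * p) (b * p - 2 * a * q)"

end

theory Submission
  imports Defs
begin

lemma rec_step:
  assumes q: "q \<noteq> 0"
  shows "rec_seq p q x0 x1 (n+2) = p * rec_seq p q x0 x1 (n+1) - q * rec_seq p q x0 x1 n"
proof (cases "n \<ge> 0")
  case True
  then have "nat (n+2) = Suc (Suc (nat n))" "nat (n+1) = Suc (nat n)" by auto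
  then show ?thesis using True by (simp add: rec_seq_def)
next
  case False
  show ?thesis
  proof (cases "n = -1")
    case True
    then show ?thesis using q by (simp add: rec_seq_def field_simps)
  next
    case False2: False
    define k where "k = nat (- n - 2)"
    have k: "n = - int k - 2" using False False2 unfolding k_def by simp
    have a: "nat (- n) = Suc (Suc k)" using k by auto
    show ?thesis
    proof (cases k)
      case 0
      have "nat (- n) = Suc (Suc 0)" using a 0 by simp
      then show ?thesis using k q 0 by (simp add: rec_seq_def field_simps numeral_2_eq_2)
    next
      case (Suc j)
      have b: "nat (-(n+1)) = Suc (Suc j)" "nat (-(n+2)) = Suc j" using k Suc by auto
      have "\<not> n + 1 \<ge> 0" "\<not> n + 2 \<ge> 0" using k Suc by auto
      then show ?thesis using a b False q Suc by (simp add: rec_seq_def field_simps)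
    qed
  qed
qed

definition isrec :: "complex \<Rightarrow> complex \<Rightarrow> (int \<Rightarrow> complex) \<Rightarrow> bool" where
  "isrec p q f \<longleftrightarrow> (\<forall>n. f (n+2) = p * f (n+1) - q * f n)"

lemma uniq0:
  assumes q: "q \<noteq> 0" and "isrec p q d" "d 0 = 0" "d 1 = 0"
  shows "d n = 0"
proof -
  have R: "d (n+2) = p * d (n+1) - q * d n" for n using assms(2) by (simp add: isrec_def)
  have fw: "d (int k) = 0 \<and> d (int k + 1) = 0" for k
  proof (induction k)
    case 0 then show ?case using assms by simp
  next
    case (Suc k)
    then show ?case using R[of "int k"] by (simp add: add.commute add.left_commute)
  qed
  have bw: "d (- int k) = 0 \<and> d (- int k + 1) = 0" for k
  proof (induction k)
    case 0 then show ?case using assms by simp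
  next
    case (Suc k)
    have "d (- int k - 1 + 2) = p * d (- int k - 1 + 1) - q * d (- int k - 1)" by (rule R)
    then have "q * d (- int k - 1) = 0" using Suc by (simp add: algebra_simps)
    then have "d (- int k - 1) = 0" using q by simp
    moreover have e1: "- int (Suc k) = - int k - 1" and e2: "- int (Suc k) + 1 = - int k" by simp_all
    ultimately show ?case using Suc unfolding e1 by simp
  qed
  show ?thesis
  proof (cases "n \<ge> 0")
    case True then show ?thesis using fw[of "nat n"] by simp
  next
    case False then show ?thesis using bw[of "nat (-n)"] by simp
  qed
qed

lemma uniq:
  assumes q: "q \<noteq> 0" and "isrec p q f" "isrec p q g" "f k = g k" "f (k+1) = g (k+1)"
  shows "f n = g n"
proof -
  define d where "d = (\<lambda>m. f (m + k) - g (m + k))"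
  have "isrec p q d" unfolding isrec_def d_def
  proof
    fix m
    have F: "f (m + k + 2) = p * f (m + k + 1) - q * f (m + k)"
      and G: "g (m + k + 2) = p * g (m + k + 1) - q * g (m + k)"
      using assms(2,3) unfolding isrec_def by blast+
    have i1: "m + 2 + k = (m+k)+2" "m+1+k = (m+k)+1" by simp_all
    show "f (m + 2 + k) - g (m + 2 + k) = p * (f (m + 1 + k) - g (m + 1 + k)) - q * (f (m + k) - g (m + k))"
      unfolding i1 by (simp only: F G) (simp add: algebra_simps)
  qed
  have f1: "f (1+k) = g (1+k)" using assms(5) by (simp add: add.commute)
  have "d (n - k) = 0"
  proof (rule uniq0[OF q \<open>isrec p q d\<close>])
    show "d 0 = 0" using assms(4) by (simp add: d_def)
    show "d 1 = 0" using f1 by (simp add: d_def add.commute)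
  qed
  then show ?thesis by (simp add: d_def)
qed

lemma geom:
  fixes q :: complex and g :: "int \<Rightarrow> complex"
  assumes q: "q \<noteq> 0" and R: "\<And>m. g (m+1) = q * g m"
  shows "g n = q powi n * g 0"
proof -
  have fw: "g (int k) = q ^ k * g 0" for k
  proof (induction k)
    case (Suc k)
    have "g (int k + 1) = q * g (int k)" by (rule R)
    have "g (int (Suc k)) = g (int k + 1)" by (simp add: add.commute)
    also have "\<dots> = q * (q ^ k * g 0)" using R Suc by simp
    finally show ?case by (simp add: mult.assoc)
  qed simp
  have bw: "g (- int k) = inverse q ^ k * g 0" for k
  proof (induction k)
    case 0 then show ?case by simp
  next
    case (Suc k)
    have "g (- int k - 1 + 1) = q * g (- int k - 1)" by (rule R)
    then have "g (- int k - 1) = inverse q * g (- int k)" using q by (simp add: field_simps)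
    moreover have "- int (Suc k) = - int k - 1" by simp
    ultimately have "g (- int (Suc k)) = inverse q * g (- int k)" by metis
    then show ?case using Suc by simp
  qed
  show ?thesis
  proof (cases "n \<ge> 0")
    case True then show ?thesis using fw[of "nat n"] by (simp add: power_int_def)
  next
    case False then show ?thesis using bw[of "nat (-n)"] by (simp add: power_int_def)
  qed
qed


lemma isrec_shift: "isrec p q f \<Longrightarrow> isrec p q (\<lambda>n. f (n + c))"
  unfolding isrec_def by (metis add.commute add.left_commute)

lemma isrec_lin:
  assumes "isrec p q f" "isrec p q g" shows "isrec p q (\<lambda>n. x * f n + y * g n)"
  unfolding isrec_def
proof
  fix n
  have F: "f (n+2) = p * f (n+1) - q * f n" and G: "g (n+2) = p * g (n+1) - q * g n"
    using assms unfolding isrec_def by blast+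
  show "x * f (n + 2) + y * g (n + 2) = p * (x * f (n + 1) + y * g (n + 1)) - q * (x * f n + y * g n)"
    unfolding F G by (simp add: algebra_simps)
qed

lemma isrec_eq: "isrec p q f \<Longrightarrow> (\<And>n. g n = f n) \<Longrightarrow> isrec p q g"
  unfolding isrec_def by simp

lemma isrec_seq: "q \<noteq> 0 \<Longrightarrow> isrec p q (rec_seq p q x0 x1)"
  unfolding isrec_def using rec_step by blast

lemma main_aux:
  fixes p q a b :: complex and n r s :: int
  assumes q: "q \<noteq> 0"
  defines "h \<equiv> horadamLucas p q a b" and "v \<equiv> lucasV p q"
      and "E \<equiv> b^2 - a*b*p + a^2*q"
  shows "h (n + s) * h (n - r) - h n * h (n - r + s)
         = E * q powi (n - r) * (v (r + s) - q powi s * v (r - s))"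
proof -
  have hr: "isrec p q h" unfolding h_def horadamLucas_def by (rule isrec_seq[OF q])
  have vr: "isrec p q v" unfolding v_def lucasV_def by (rule isrec_seq[OF q])
  have H: "h (j+2) = p * h (j+1) - q * h j" for j using hr unfolding isrec_def by blast
  have V: "v (j+2) = p * v (j+1) - q * v j" for j using vr unfolding isrec_def by blast
  have h0: "h 0 = 2 * b - a * p" and h1: "h 1 = b * p - 2 * a * q"
    unfolding h_def horadamLucas_def rec_seq_def by simp_all
  have v0: "v 0 = 2" and v1: "v 1 = p" and vm1: "v (-1) = p / q"
    unfolding v_def lucasV_def rec_seq_def by simp_all
  have v2: "v 2 = p^2 - 2*q" using V[of 0] v0 v1 by (simp add: power2_eq_square)
  have h2: "h 2 = p * h 1 - q * h 0" using H[of 0] by simp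
  have cas: "h (m+2) * h m - (h (m+1))^2 = E * q powi m * (p^2 - 4*q)" for m
  proof -
    define g where "g = (\<lambda>m. h (m+2) * h m - (h (m+1))^2)"
    have "g (m+1) = q * g m" for m
    proof -
      have e: "m+1+1 = m+2" by simp
      have R1: "h ((m+1)+2) = p * h (m+2) - q * h (m+1)" using H[of "m+1"] by (simp add: add.assoc)
      have R0: "h (m+2) = p * h (m+1) - q * h m" by (rule H)
      show ?thesis unfolding g_def e R1 R0 by (simp add: algebra_simps power2_eq_square)
    qed
    then have "g m = q powi m * g 0" by (rule geom[OF q])
    moreover have "g 0 = E * (p^2 - 4*q)"
      unfolding g_def E_def by (simp add: h2) (simp add: h0 h1 algebra_simps power2_eq_square)
    ultimately show ?thesis unfolding g_def by simp
  qed
  have st2: "h (k+1) * h m - h k * h (m+1) = E * q powi m * (v (k-m+1) - q * v (k-m-1))" for k m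
  proof -
    define f where "f = (\<lambda>k. h (k+1) * h m - h k * h (m+1))"
    define g where "g = (\<lambda>k. E * q powi m * (v (k-m+1) - q * v (k-m-1)))"
    have fr: "isrec p q f"
      by (rule isrec_eq[OF isrec_lin[OF isrec_shift[OF hr, of 1] hr, of "h m" "- h (m+1)"]])
         (simp add: f_def)
    have gr: "isrec p q g"
      by (rule isrec_eq[OF isrec_lin[OF isrec_shift[OF vr, of "1-m"] isrec_shift[OF vr, of "-m-1"],
           of "E * q powi m" "- (E * q powi m * q)"]])
         (simp add: g_def algebra_simps)
    have "f m = g m" using q unfolding f_def g_def by (simp add: v1 vm1)
    moreover have "f (m+1) = g (m+1)"
    proof -
      have "f (m+1) = h (m+2) * h m - (h (m+1))^2" unfolding f_def
        by (simp add: power2_eq_square add.assoc)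
      also have "\<dots> = E * q powi m * (p^2 - 4*q)" by (rule cas)
      also have "\<dots> = g (m+1)" unfolding g_def using v0 v2 by simp
      finally show ?thesis .
    qed
    ultimately have "f k = g k" by (rule uniq[OF q fr gr])
    then show ?thesis unfolding f_def g_def .
  qed
  define f where "f = (\<lambda>s. h (n + s) * h (n - r) - h n * h (n - r + s))"
  define g where "g = (\<lambda>s. E * q powi (n - r) * (v (r + s) - q powi s * v (r - s)))"
  have fr: "isrec p q f"
    by (rule isrec_eq[OF isrec_lin[OF isrec_shift[OF hr, of n] isrec_shift[OF hr, of "n-r"],
           of "h (n-r)" "- h n"]])
       (simp add: f_def algebra_simps)
  have wr: "isrec p q (\<lambda>s. q powi s * v (r - s))"
    unfolding isrec_def
  proof
    fix s
    have p2: "q powi (s+2) = q powi s * q^2" and p1: "q powi (s+1) = q powi s * q"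
      using q by (simp_all add: power_int_add)
    have "v ((r-s-2)+2) = p * v ((r-s-2)+1) - q * v (r-s-2)" by (rule V)
    then have X: "v (r-s) = p * v (r-s-1) - q * v (r-s-2)" by simp
    have e: "r - (s+2) = r-s-2" "r - (s+1) = r-s-1" by simp_all
    show "q powi (s+2) * v (r - (s+2)) = p * (q powi (s+1) * v (r - (s+1))) - q * (q powi s * v (r - s))"
      unfolding p2 p1 e X using q by (simp add: field_simps power2_eq_square)
  qed
  have gr: "isrec p q g"
    by (rule isrec_eq[OF isrec_lin[OF isrec_shift[OF vr, of r] wr, of "E * q powi (n-r)" "- E * q powi (n-r)"]])
       (simp add: g_def algebra_simps)
  have "f 0 = g 0" unfolding f_def g_def by simp
  moreover have "f (0+1) = g (0+1)"
    using st2[of n "n-r"] unfolding f_def g_def by (simp add: add.commute)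
  ultimately have "f s = g s" by (rule uniq[OF q fr gr])
  then show ?thesis unfolding f_def g_def .
qed

theorem mainTheorem9:
  fixes p q a b :: complex and n r s :: int
  assumes "q \<noteq> 0"
  shows "horadamLucas p q a b (n + s) * horadamLucas p q a b (n - r)
           - horadamLucas p q a b n * horadamLucas p q a b (n - r + s)
         = (b^2 - a*b*p + a^2*q) * q powi (n - r) * (lucasV p q (r + s) - q powi s * lucasV p q (r - s))"
  by (rule main_aux[OF assms])

end
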